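(* Let $n\ge 2$, $b\ge 2$ and $1\le r<b$ be integers with $n\ge b-r-1$. Then the circulant graph $G_{nb+r,b}$ satisfies $\operatorname{box}(G_{nb+r,b})\le\chi(G_{nb+r,b})$.
   Context: For integers $a\ge 2b\ge 2$, $G_{a,b}$ is the graph with vertex set $\{0,1,\ldots,a-1\}$ in which distinct $u,v$ are adjacent if and only if $u\in\{v+b,v+b+1,\ldots,v+a-b\}$ with addition modulo $a$. The boxicity $\operatorname{box}(G)$ is the minimum nonnegative integer $k$ such that $G$ is isomorphic to the intersection graph of a family of boxes (Cartesian products of $k$ closed real intervals) in $\mathbb{R}^k$. $\chi(G)$ is the chromatic number. *)

theory Defs
  imports Main Complex_Main
begin

definition circ_V :: "nat \<Rightarrow> nat set" where
  "circ_V a = {0..<a}"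

definition circ_adj :: "nat \<Rightarrow> nat \<Rightarrow> nat \<Rightarrow> nat \<Rightarrow> bool" where
  "circ_adj a b u v \<longleftrightarrow> u \<noteq> v \<and> (\<exists>k \<in> {b..a-b}. u = (v + k) mod a)"

definition box_rep :: "'a set \<Rightarrow> ('a \<Rightarrow> 'a \<Rightarrow> bool) \<Rightarrow> nat \<Rightarrow> bool" where
  "box_rep V E k \<longleftrightarrow> (\<exists>l h :: 'a \<Rightarrow> nat \<Rightarrow> real.
      (\<forall>v\<in>V. \<forall>i<k. l v i \<le> h v i) \<and>
      (\<forall>u\<in>V. \<forall>v\<in>V. u \<noteq> v \<longrightarrow>
         (E u v \<longleftrightarrow> (\<forall>i<k. {l u i..h u i} \<inter> {l v i..h v i} \<noteq> {}))))"

definition boxicity :: "'a set \<Rightarrow> ('a \<Rightarrow> 'a \<Rightarrow> bool) \<Rightarrow> nat" where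
  "boxicity V E = (LEAST k. box_rep V E k)"

definition proper_colouring :: "'a set \<Rightarrow> ('a \<Rightarrow> 'a \<Rightarrow> bool) \<Rightarrow> nat \<Rightarrow> ('a \<Rightarrow> nat) \<Rightarrow> bool" where
  "proper_colouring V E k c \<longleftrightarrow>
     (\<forall>v\<in>V. c v < k) \<and> (\<forall>u\<in>V. \<forall>v\<in>V. u \<noteq> v \<longrightarrow> E u v \<longrightarrow> c u \<noteq> c v)"

definition chromatic_number :: "'a set \<Rightarrow> ('a \<Rightarrow> 'a \<Rightarrow> bool) \<Rightarrow> nat" where
  "chromatic_number V E = (LEAST k. \<exists>c. proper_colouring V E k c)"

end

theory Submission
  imports Defs "HOL-Number_Theory.Cong"
begin

lemma mod_shift_ne:
  fixes x k a :: nat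
  assumes "x < a" "0 < k" "k < a"
  shows "(x + k) mod a \<noteq> x"
proof (cases "x + k < a")
  case True then show ?thesis using assms by simp
next
  case False
  then have "(x + k) mod a = x + k - a" using assms
    by (simp add: le_mod_geq)
  then show ?thesis using assms False by simp
qed

lemma adj_char:
  fixes a b u v :: nat
  assumes "u < a" "v < a" "1 \<le> b" "2*b \<le> a"
  shows "circ_adj a b u v \<longleftrightarrow> (int b \<le> \<bar>int u - int v\<bar> \<and> \<bar>int u - int v\<bar> \<le> int a - int b)"
proof
  assume "circ_adj a b u v"
  then obtain k where k: "b \<le> k" "k \<le> a - b" "u = (v + k) mod a"
    unfolding circ_adj_def by auto
  show "(int b \<le> \<bar>int u - int v\<bar> \<and> \<bar>int u - int v\<bar> \<le> int a - int b)"
  proof (cases "v + k < a")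
    case True then have "u = v + k" using k by simp
    then show ?thesis using k assms by auto
  next
    case False then have "u = v + k - a" using k assms by (simp add: le_mod_geq)
    then show ?thesis using k assms False by auto
  qed
next
  assume h: "(int b \<le> \<bar>int u - int v\<bar> \<and> \<bar>int u - int v\<bar> \<le> int a - int b)"
  show "circ_adj a b u v"
  proof (cases "v \<le> u")
    case True
    then have "u = (v + (u - v)) mod a" using assms by simp
    moreover have "u - v \<in> {b..a-b}" using h True by auto
    moreover have "u \<noteq> v" using h assms by auto
    ultimately show ?thesis unfolding circ_adj_def by blast
  next
    case False
    then have "u = (v + (u + a - v)) mod a" using assms
      by (simp add: le_mod_geq)
    moreover have "u + a - v \<in> {b..a-b}" using h False by auto
    moreover have "u \<noteq> v" using h assms by auto
    ultimately show ?thesis unfolding circ_adj_def by blast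
  qed
qed


lemma indep_xstar:
  fixes a b :: nat and I :: "nat set"
  assumes I: "I \<subseteq> {0..<a}" and ind: "\<forall>u\<in>I. \<forall>v\<in>I. u \<noteq> v \<longrightarrow> \<not> circ_adj a b u v"
    and b1: "1 \<le> b" and ab: "2*b < a" and ne: "x0 \<in> I"
  shows "\<exists>xs\<in>I. \<forall>e\<in>{1..a-2*b}. (xs + e) mod a \<notin> I"
proof (rule ccontr)
  assume "\<not> ?thesis"
  then have H: "\<forall>y\<in>I. \<exists>e\<in>{1..a-2*b}. (y + e) mod a \<in> I" by blast
  have x0a: "x0 < a" using I ne by auto
  have "\<exists>D. k \<le> D \<and> D \<le> b - 1 \<and> (x0 + D) mod a \<in> I" for k
  proof (induction k)
    case 0
    then show ?case using ne x0a by (intro exI[of _ 0]) auto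
  next
    case (Suc k)
    then obtain D where D: "k \<le> D" "D \<le> b - 1" "(x0 + D) mod a \<in> I" by blast
    then obtain e where e: "e \<in> {1..a-2*b}" "((x0 + D) mod a + e) mod a \<in> I" using H by blast
    have eq: "((x0 + D) mod a + e) mod a = (x0 + (D + e)) mod a"
      by (simp add: mod_add_left_eq add.assoc)
    show ?case
    proof (cases "D + e \<le> b - 1")
      case True then show ?thesis using D e eq by (intro exI[of _ "D+e"]) auto
    next
      case False
      then have r: "D + e \<in> {b..a-b}" using e D b1 ab by auto
      have "0 < D + e" "D + e < a" using r b1 ab by auto
      then have ne2: "(x0 + (D + e)) mod a \<noteq> x0" using mod_shift_ne[of x0 a "D+e"] x0a by auto
      have "circ_adj a b ((x0 + (D + e)) mod a) x0"
        unfolding circ_adj_def using r ne2 by blast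
      then show ?thesis using ind ne e eq ne2 by metis
    qed
  qed
  from this[of b] show False using b1 by auto
qed

lemma indep_bound:
  fixes a b :: nat and I :: "nat set"
  assumes I: "I \<subseteq> {0..<a}" and ind: "\<forall>u\<in>I. \<forall>v\<in>I. u \<noteq> v \<longrightarrow> \<not> circ_adj a b u v"
    and b1: "1 \<le> b" and ab: "2*b < a"
  shows "card I \<le> b"
proof (cases "I = {}")
  case True then show ?thesis by simp
next
  case False
  then obtain x0 where x0: "x0 \<in> I" by auto
  obtain xs where xs: "xs \<in> I" and nx: "\<forall>e\<in>{1..a-2*b}. (xs + e) mod a \<notin> I"
    using indep_xstar[OF I ind b1 ab x0] by blast
  have xsa: "xs < a" using xs I by auto
  define U1 where "U1 = (\<lambda>x. (x + b) mod a) ` I"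
  define U2 where "U2 = (\<lambda>d. (xs + d) mod a) ` {b..a-b}"
  have fin: "finite I" using I finite_subset by blast
  have inj1: "inj_on (\<lambda>x. (x + b) mod a) I"
  proof (rule inj_onI)
    fix x y assume "x \<in> I" "y \<in> I" "(x + b) mod a = (y + b) mod a"
    then have "[x + b = y + b] (mod a)" by (simp add: cong_def)
    then have "[x = y] (mod a)" by (simp add: cong_add_rcancel_nat)
    then show "x = y" using \<open>x \<in> I\<close> \<open>y \<in> I\<close> I
      by (metis atLeastLessThan_iff cong_def mod_less subsetD)
  qed
  have inj2: "inj_on (\<lambda>d. (xs + d) mod a) {b..a-b}"
  proof (rule inj_onI)
    fix x y assume "x \<in> {b..a-b}" "y \<in> {b..a-b}" "(xs + x) mod a = (xs + y) mod a"
    then have "[xs + x = xs + y] (mod a)" by (simp add: cong_def)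
    then have "[x = y] (mod a)" by (simp add: cong_add_lcancel_nat)
    then show "x = y" using \<open>x \<in> {b..a-b}\<close> \<open>y \<in> {b..a-b}\<close> b1 by (auto simp: cong_def)
  qed
  have c1: "card U1 = card I" unfolding U1_def using card_image[OF inj1] .
  have c2: "card U2 = a - 2*b + 1" unfolding U2_def using card_image[OF inj2] ab by simp
  have s1: "U1 \<subseteq> {0..<a}" "U2 \<subseteq> {0..<a}" unfolding U1_def U2_def using ab by auto
  have d1: "I \<inter> U1 = {}"
  proof (rule ccontr)
    assume "I \<inter> U1 \<noteq> {}"
    then obtain x where x: "x \<in> I" "(x + b) mod a \<in> I" unfolding U1_def by auto
    have xa: "x < a" using x I by auto
    have ne2: "(x + b) mod a \<noteq> x" using mod_shift_ne[of x a b] xa b1 ab by auto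
    have "circ_adj a b ((x + b) mod a) x" unfolding circ_adj_def using ne2 ab by force
    then show False using ind x ne2 by blast
  qed
  have d2: "I \<inter> U2 = {}"
  proof (rule ccontr)
    assume "I \<inter> U2 \<noteq> {}"
    then obtain z where z: "z \<in> I" "z \<in> U2" by blast
    then obtain d where d: "d \<in> {b..a-b}" "(xs + d) mod a \<in> I" unfolding U2_def by blast
    have "0 < d" "d < a" using d b1 ab by auto
    then have ne2: "(xs + d) mod a \<noteq> xs" using mod_shift_ne[of xs a d] xsa by auto
    have "circ_adj a b ((xs + d) mod a) xs" unfolding circ_adj_def using ne2 d by blast
    then show False using ind xs d ne2 by blast
  qed
  have d3: "U1 \<inter> U2 \<subseteq> {(xs + b) mod a}"
  proof
    fix z assume "z \<in> U1 \<inter> U2"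
    then obtain x d where x: "x \<in> I" "d \<in> {b..a-b}" "z = (x + b) mod a" "z = (xs + d) mod a"
      unfolding U1_def U2_def by auto
    show "z \<in> {(xs + b) mod a}"
    proof (cases "d = b")
      case True then show ?thesis using x by simp
    next
      case False
      then have e: "d - b \<in> {1..a-2*b}" using x by auto
      have "[x + b = (xs + (d - b)) + b] (mod a)" using x False by (simp add: cong_def add_ac)
      then have "[x = xs + (d - b)] (mod a)" by (simp add: cong_add_rcancel_nat)
      then have "x = (xs + (d - b)) mod a" using x I by (auto simp: cong_def)
      then show ?thesis using nx e x by auto
    qed
  qed
  have fU: "finite U1" "finite U2" using s1 finite_subset by auto
  have "card (U1 \<inter> U2) \<le> 1" using card_mono[OF _ d3] by simp
  then have cu: "card (U1 \<union> U2) + 1 \<ge> card I + (a - 2*b + 1)"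
    using card_Un_Int[OF fU] c1 c2 by linarith
  have "card (I \<union> (U1 \<union> U2)) = card I + card (U1 \<union> U2)"
    using card_Un_disjoint[of I "U1 \<union> U2"] fin fU d1 d2 by auto
  moreover have "card (I \<union> (U1 \<union> U2)) \<le> a"
    using card_mono[of "{0..<a}" "I \<union> (U1 \<union> U2)"] I s1 by auto
  ultimately show ?thesis using cu ab by linarith
qed


lemma colour_bound:
  fixes a b k :: nat and c :: "nat \<Rightarrow> nat"
  assumes pc: "proper_colouring (circ_V a) (circ_adj a b) k c"
    and b1: "1 \<le> b" and ab: "2*b < a"
  shows "a \<le> k * b"
proof -
  define C where "C j = {v \<in> {0..<a}. c v = j}" for j
  have "{0..<a} \<subseteq> (\<Union>j\<in>{..<k}. C j)" using pc unfolding proper_colouring_def circ_V_def C_def by auto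
  then have "card {0..<a} \<le> card (\<Union>j\<in>{..<k}. C j)"
    by (intro card_mono) (auto simp: C_def)
  also have "\<dots> \<le> (\<Sum>j\<in>{..<k}. card (C j))" by (rule card_UN_le) simp
  also have "\<dots> \<le> (\<Sum>j\<in>{..<k}. b)"
  proof (rule sum_mono)
    fix j assume "j \<in> {..<k}"
    have "\<forall>u\<in>C j. \<forall>v\<in>C j. u \<noteq> v \<longrightarrow> \<not> circ_adj a b u v"
      using pc unfolding C_def proper_colouring_def circ_V_def by blast
    then show "card (C j) \<le> b"
      by (rule indep_bound[OF _ _ b1 ab, rotated]) (auto simp: C_def)
  qed
  finally show ?thesis by simp
qed

definition tt :: "nat \<Rightarrow> nat \<Rightarrow> nat \<Rightarrow> int" where
  "tt a p v = (if p \<le> v then int v - int p else int v + int a - int p)"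
definition blk :: "nat \<Rightarrow> nat \<Rightarrow> nat \<Rightarrow> bool" where
  "blk b p v \<longleftrightarrow> p \<le> v \<and> v < p + b"
definition loI :: "nat \<Rightarrow> nat \<Rightarrow> nat \<Rightarrow> nat \<Rightarrow> int" where
  "loI a b p v = (if blk b p v then - 2 * tt a p v else 2 * int b - 2 * tt a p v - 1)"
definition hiI :: "nat \<Rightarrow> nat \<Rightarrow> nat \<Rightarrow> nat \<Rightarrow> int" where
  "hiI a b p v = (if blk b p v then - 2 * tt a p v else 2 * int a)"

lemma ivl_int:
  fixes l1 h1 l2 h2 :: real
  assumes "l1 \<le> h1" "l2 \<le> h2"
  shows "{l1..h1} \<inter> {l2..h2} \<noteq> {} \<longleftrightarrow> l1 \<le> h2 \<and> l2 \<le> h1"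
proof
  assume "{l1..h1} \<inter> {l2..h2} \<noteq> {}"
  then show "l1 \<le> h2 \<and> l2 \<le> h1" by auto
next
  assume "l1 \<le> h2 \<and> l2 \<le> h1"
  then have "max l1 l2 \<in> {l1..h1} \<inter> {l2..h2}" using assms by auto
  then show "{l1..h1} \<inter> {l2..h2} \<noteq> {}" by blast
qed

lemma lo_hi: "p < a \<Longrightarrow> b \<le> a \<Longrightarrow> v < a \<Longrightarrow> loI a b p v \<le> hiI a b p v"
  unfolding loI_def hiI_def tt_def blk_def by (auto split: if_splits)

lemma dim_adj:
  fixes a b p u v :: nat
  assumes p: "p < a" and b1: "1 \<le> b" and ba: "2*b \<le> a"
    and u: "u < a" and v: "v < a"
    and adj: "int b \<le> \<bar>int u - int v\<bar>" "\<bar>int u - int v\<bar> \<le> int a - int b"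
  shows "loI a b p u \<le> hiI a b p v"
  using assms unfolding loI_def hiI_def tt_def blk_def
  by (auto split: if_splits)

lemma dim_nonadj:
  fixes a b p u v :: nat
  assumes p: "p \<le> u" "u < p + b" and b1: "1 \<le> b" and ba: "2*b \<le> a"
    and u: "u < a" and v: "v < a" and uv: "u \<noteq> v"
    and nadj: "(int v - int u > 0 \<and> int v - int u < int b) \<or> int u - int v > int a - int b"
  shows "hiI a b p v < loI a b p u \<or> hiI a b p u < loI a b p v"
  using assms unfolding loI_def hiI_def tt_def blk_def
  by (auto split: if_splits)


theorem theorem4p2:
  fixes n b r :: nat
  assumes "n \<ge> 2" and "b \<ge> 2" and "1 \<le> r" and "r < b" and "n \<ge> b - r - 1"
  shows "boxicity (circ_V (n*b+r)) (circ_adj (n*b+r) b)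
           \<le> chromatic_number (circ_V (n*b+r)) (circ_adj (n*b+r) b)"
proof -
  define a where "a = n*b + r"
  have b1: "1 \<le> b" using assms by simp
  have "2*b \<le> n*b" using assms by (intro mult_le_mono1) simp
  then have ab: "2*b < a" unfolding a_def using assms by linarith
  have pa: "i*b < a" if "i < n+1" for i
  proof -
    have "i*b \<le> n*b" using that by (intro mult_le_mono1) simp
    then show ?thesis unfolding a_def using assms by linarith
  qed
  have divn: "v div b < n + 1" if "v < a" for v
  proof -
    have "v < (n+1)*b" using that assms unfolding a_def by simp
    then show ?thesis using b1 by (simp add: less_mult_imp_div_less)
  qed
  define l where "l v i = real_of_int (loI a b (i*b) v)" for v i
  define h where "h v i = real_of_int (hiI a b (i*b) v)" for v i
  have rep: "box_rep (circ_V a) (circ_adj a b) (n+1)"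
    unfolding box_rep_def
  proof (rule exI[of _ l], rule exI[of _ h], intro conjI)
    show "\<forall>v\<in>circ_V a. \<forall>i<n+1. l v i \<le> h v i" unfolding l_def h_def using lo_hi pa ab
      by (auto simp: circ_V_def)
  next
    show "\<forall>u\<in>circ_V a. \<forall>v\<in>circ_V a. u \<noteq> v \<longrightarrow> (circ_adj a b u v \<longleftrightarrow> (\<forall>i<n+1. {l u i..h u i} \<inter> {l v i..h v i} \<noteq> {}))"
    proof (intro ballI impI)
    fix u v assume uV: "u \<in> circ_V a" and vV: "v \<in> circ_V a" and uv: "u \<noteq> v"
    have ua: "u < a" and va: "v < a" using uV vV by (auto simp: circ_V_def)
    have lh: "l w i \<le> h w i" if "w < a" "i < n+1" for w i
      unfolding l_def h_def using lo_hi[of "i*b" a b w] pa[OF that(2)] ab that by auto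
    have inter: "{l u i..h u i} \<inter> {l v i..h v i} \<noteq> {} \<longleftrightarrow>
        loI a b (i*b) u \<le> hiI a b (i*b) v \<and> loI a b (i*b) v \<le> hiI a b (i*b) u" if "i < n+1" for i
      using ivl_int[OF lh[OF ua that] lh[OF va that]] unfolding l_def h_def by simp
    show "circ_adj a b u v \<longleftrightarrow> (\<forall>i<n+1. {l u i..h u i} \<inter> {l v i..h v i} \<noteq> {})"
    proof
      assume "circ_adj a b u v"
      then have c: "int b \<le> \<bar>int u - int v\<bar>" "\<bar>int u - int v\<bar> \<le> int a - int b"
        using adj_char[OF ua va b1] ab by auto
      then have c': "int b \<le> \<bar>int v - int u\<bar>" "\<bar>int v - int u\<bar> \<le> int a - int b" by auto
      show "\<forall>i<n+1. {l u i..h u i} \<inter> {l v i..h v i} \<noteq> {}"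
        using inter dim_adj[OF pa b1 _ ua va c] dim_adj[OF pa b1 _ va ua c'] ab by auto
    next
      assume all: "\<forall>i<n+1. {l u i..h u i} \<inter> {l v i..h v i} \<noteq> {}"
      show "circ_adj a b u v"
      proof (rule ccontr)
        assume "\<not> circ_adj a b u v"
        then have na: "\<not> (int b \<le> \<bar>int u - int v\<bar> \<and> \<bar>int u - int v\<bar> \<le> int a - int b)"
          using adj_char[OF ua va b1] ab by auto
        have blk: "w div b * b \<le> w \<and> w < w div b * b + b" for w
        proof -
          have "w div b * b + w mod b = w" by (rule div_mult_mod_eq)
          moreover have "w mod b < b" using b1 by simp
          ultimately show ?thesis by linarith
        qed
        show False
        proof (cases "(int v - int u > 0 \<and> int v - int u < int b) \<or> int u - int v > int a - int b")
          case True
          have "hiI a b (u div b * b) v < loI a b (u div b * b) u \<or> hiI a b (u div b * b) u < loI a b (u div b * b) v"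
            by (rule dim_nonadj[OF conjunct1[OF blk] conjunct2[OF blk] b1 _ ua va uv True]) (use ab in simp)
          then show False using all inter divn[OF ua] by fastforce
        next
          case False
          then have F: "(int u - int v > 0 \<and> int u - int v < int b) \<or> int v - int u > int a - int b"
            using na uv by auto
          have "hiI a b (v div b * b) u < loI a b (v div b * b) v \<or> hiI a b (v div b * b) v < loI a b (v div b * b) u"
            by (rule dim_nonadj[OF conjunct1[OF blk] conjunct2[OF blk] b1 _ va ua uv[symmetric] F]) (use ab in simp)
          then show False using all inter divn[OF va] by fastforce
        qed
      qed
    qed
    qed
  qed
  have "boxicity (circ_V a) (circ_adj a b) \<le> n+1"
    unfolding boxicity_def by (rule Least_le) (rule rep)
  moreover have "n+1 \<le> chromatic_number (circ_V a) (circ_adj a b)"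
  proof -
    have ex: "\<exists>k c. proper_colouring (circ_V a) (circ_adj a b) k c"
      by (rule exI[of _ a], rule exI[of _ id]) (auto simp: proper_colouring_def circ_V_def)
    obtain c where c: "proper_colouring (circ_V a) (circ_adj a b) (chromatic_number (circ_V a) (circ_adj a b)) c"
      unfolding chromatic_number_def using LeastI_ex[OF ex] by blast
    have "a \<le> chromatic_number (circ_V a) (circ_adj a b) * b" by (rule colour_bound[OF c b1 ab])
    then show ?thesis
    proof -
      assume h: "a \<le> chromatic_number (circ_V a) (circ_adj a b) * b"
      show ?thesis
      proof (rule ccontr)
        assume "\<not> ?thesis"
        then have "chromatic_number (circ_V a) (circ_adj a b) * b \<le> n * b" by (intro mult_le_mono1) simp
        then show False using h assms unfolding a_def by linarith
      qed
    qed
  qed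
  ultimately show ?thesis unfolding a_def by simp
qed

end
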